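(* Fix $T>0$ and $v_f=\psi_m$ for some $m\in\{0,\dots,2J\}$. Consider the linear ODE $$\frac{d}{dt}v_t=(-iF_y-F_z^2+CF_z)v_t,\qquad v_0\in\mathbb{C}^N\setminus\{0\}.$$ For all sufficiently large real constants $C$, for every $v_0\ne0$ there exists $t\in[0,T]$ such that $v_t^*v_f\ne0$.
   Context: $2J\in\mathbb{N}$, $J>0$, $N=2J+1$; $\{\psi_k\}_{k=0}^{2J}$ standard basis of $\mathbb{C}^N$; $F_y\psi_k=ic_{k-J}\psi_{k+1}-ic_{J-k}\psi_{k-1}$, $F_z\psi_k=(k-J)\psi_k$, $c_m=\tfrac12\sqrt{(J-m)(J+m+1)}$. *)

theory Defs
  imports "HOL-Analysis.Analysis"
begin

text \<open>Convention: n = 2J (a natural number, n > 0), so J = n/2 and N = n+1.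
 Vectors in C^N are functions nat => complex restricted to indices 0..n;
 N x N matrices are functions nat => nat => complex restricted to 0..n.\<close>

definition spinJ :: "nat \<Rightarrow> real" where
  "spinJ n = real n / 2"

definition cc :: "nat \<Rightarrow> real \<Rightarrow> real" where
  "cc n m = (1/2) * sqrt ((spinJ n - m) * (spinJ n + m + 1))"

definition psi :: "nat \<Rightarrow> nat \<Rightarrow> complex" where
  "psi k = (\<lambda>j. if j = k then 1 else 0)"

definition Fz :: "nat \<Rightarrow> nat \<Rightarrow> nat \<Rightarrow> complex" where
  "Fz n j k = (if j = k then complex_of_real (real k - spinJ n) else 0)"

text \<open>Matrix of F_y: F_y psi_k = i c_{k-J} psi_{k+1} - i c_{J-k} psi_{k-1}
  (entry (j,k) is the j-th coordinate of F_y psi_k).\<close>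
definition Fy :: "nat \<Rightarrow> nat \<Rightarrow> nat \<Rightarrow> complex" where
  "Fy n j k =
     (if j = k + 1 then \<i> * complex_of_real (cc n (real k - spinJ n))
      else if k = j + 1 then - \<i> * complex_of_real (cc n (spinJ n - real k))
      else 0)"

definition mmul :: "nat \<Rightarrow> (nat \<Rightarrow> nat \<Rightarrow> complex) \<Rightarrow> (nat \<Rightarrow> nat \<Rightarrow> complex) \<Rightarrow> nat \<Rightarrow> nat \<Rightarrow> complex" where
  "mmul n A B = (\<lambda>j k. \<Sum>l\<le>n. A j l * B l k)"

definition Gen :: "nat \<Rightarrow> real \<Rightarrow> nat \<Rightarrow> nat \<Rightarrow> complex" where
  "Gen n C = (\<lambda>j k. - \<i> * Fy n j k - mmul n (Fz n) (Fz n) j k + complex_of_real C * Fz n j k)"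

definition solves_ode :: "nat \<Rightarrow> (nat \<Rightarrow> nat \<Rightarrow> complex) \<Rightarrow> real \<Rightarrow> (real \<Rightarrow> nat \<Rightarrow> complex) \<Rightarrow> bool" where
  "solves_ode n A T v \<longleftrightarrow>
     (\<forall>t\<in>{0..T}. \<forall>j\<le>n.
        ((\<lambda>s. v s j) has_vector_derivative (\<Sum>k\<le>n. A j k * v t k)) (at t within {0..T}))"

definition vdot :: "nat \<Rightarrow> (nat \<Rightarrow> complex) \<Rightarrow> (nat \<Rightarrow> complex) \<Rightarrow> complex" where
  "vdot n v w = (\<Sum>k\<le>n. cnj (v k) * w k)"

end

theory Submission
  imports Defs
begin

definition mv :: "nat \<Rightarrow> (nat \<Rightarrow> nat \<Rightarrow> complex) \<Rightarrow> (nat \<Rightarrow> complex) \<Rightarrow> nat \<Rightarrow> complex" where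
  "mv n A y = (\<lambda>j. \<Sum>l\<le>n. A j l * y l)"

definition WW :: "nat \<Rightarrow> (nat \<Rightarrow> nat \<Rightarrow> complex) \<Rightarrow> nat \<Rightarrow> (nat \<Rightarrow> complex) \<Rightarrow> bool" where
  "WW n A m y \<longleftrightarrow> (\<forall>k. (mv n A ^^ k) y m = 0)"

definition topn :: "nat \<Rightarrow> (nat \<Rightarrow> complex) \<Rightarrow> real" where
  "topn m y = (\<Sum>k<m. cmod (y k))"

definition botn :: "nat \<Rightarrow> nat \<Rightarrow> (nat \<Rightarrow> complex) \<Rightarrow> real" where
  "botn n m y = (\<Sum>k\<in>{m<..n}. cmod (y k))"

lemma topn_nonneg: "0 \<le> topn m y" unfolding topn_def by (simp add: sum_nonneg)
lemma botn_nonneg: "0 \<le> botn n m y" unfolding botn_def by (simp add: sum_nonneg)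

lemma le_topn: "k < m \<Longrightarrow> cmod (y k) \<le> topn m y"
  unfolding topn_def by (rule member_le_sum) auto
lemma le_botn: "m < k \<Longrightarrow> k \<le> n \<Longrightarrow> cmod (y k) \<le> botn n m y"
  unfolding botn_def by (rule member_le_sum) auto

lemma mv_lin: "mv n A (\<lambda>j. a * y j + b * z j) = (\<lambda>j. a * mv n A y j + b * mv n A z j)"
  by (simp add: mv_def sum.distrib sum_distrib_left algebra_simps fun_eq_iff)

lemma mvpow_lin: "(mv n A ^^ k) (\<lambda>j. a * y j + b * z j) = (\<lambda>j. a * (mv n A ^^ k) y j + b * (mv n A ^^ k) z j)"
  by (induction k) (simp_all add: mv_lin)

lemma WW_lin: "WW n A m y \<Longrightarrow> WW n A m z \<Longrightarrow> WW n A m (\<lambda>j. a * y j + b * z j)"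
  unfolding WW_def by (simp add: mvpow_lin)

lemma WW_mv: "WW n A m y \<Longrightarrow> WW n A m (mv n A y)"
  unfolding WW_def by (metis funpow_Suc_right funpow_swap1 o_apply)

lemma WW_zero: "WW n A m y \<Longrightarrow> y m = 0"
  unfolding WW_def by (metis funpow_0)


lemma topA:
  assumes H1: "\<forall>p l. p \<le> n \<longrightarrow> l \<le> n \<longrightarrow> Suc p < l \<longrightarrow> A p l = 0"
    and mn: "m \<le> n" and ym: "y m = 0" and km: "k < m"
  shows "mv n A y k = (\<Sum>l<m. A k l * y l)"
proof -
  have "(\<Sum>l\<le>n. A k l * y l) = (\<Sum>l<m. A k l * y l)"
  proof (rule sum.mono_neutral_right)
    show "\<forall>i\<in>{..n} - {..<m}. A k i * y i = 0"
    proof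
      fix l assume l: "l \<in> {..n} - {..<m}"
      show "A k l * y l = 0"
      proof (cases "l = m")
        case True then show ?thesis using ym by simp
      next
        case False then have "Suc k < l" using l km by auto
        then show ?thesis using H1 l km mn by auto
      qed
    qed
  qed (use mn in auto)
  then show ?thesis by (simp add: mv_def)
qed

lemma botA:
  assumes H2: "\<forall>p l. p \<le> n \<longrightarrow> l \<le> n \<longrightarrow> Suc l < p \<longrightarrow> A p l = 0"
    and mn: "m \<le> n" and ym: "y m = 0" and km: "k \<in> {m<..n}"
  shows "mv n A y k = (\<Sum>l\<in>{m<..n}. A k l * y l)"
proof -
  have "(\<Sum>l\<le>n. A k l * y l) = (\<Sum>l\<in>{m<..n}. A k l * y l)"
  proof (rule sum.mono_neutral_right)
    show "\<forall>i\<in>{..n} - {m<..n}. A k i * y i = 0"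
    proof
      fix l assume l: "l \<in> {..n} - {m<..n}"
      show "A k l * y l = 0"
      proof (cases "l = m")
        case True then show ?thesis using ym by simp
      next
        case False then have "Suc l < k" using l km by auto
        then show ?thesis using H2 l km mn by auto
      qed
    qed
  qed (use mn in auto)
  then show ?thesis by (simp add: mv_def)
qed

lemma topn_mv:
  assumes H1: "\<forall>p l. p \<le> n \<longrightarrow> l \<le> n \<longrightarrow> Suc p < l \<longrightarrow> A p l = 0"
    and mn: "m \<le> n" and ym: "y m = 0"
  shows "topn m (mv n A y) \<le> (\<Sum>k<m. \<Sum>l<m. cmod (A k l)) * topn m y"
proof -
  have "cmod (mv n A y k) \<le> (\<Sum>l<m. cmod (A k l)) * topn m y" if km: "k < m" for k
  proof -
    have "cmod (mv n A y k) \<le> (\<Sum>l<m. cmod (A k l * y l))"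
      using topA[of n A m y k, OF H1 mn ym km] by (simp add: norm_sum)
    also have "\<dots> \<le> (\<Sum>l<m. cmod (A k l) * topn m y)"
      by (rule sum_mono) (simp add: norm_mult le_topn mult_left_mono)
    finally show ?thesis by (simp add: sum_distrib_right)
  qed
  then have "topn m (mv n A y) \<le> (\<Sum>k<m. (\<Sum>l<m. cmod (A k l)) * topn m y)"
    unfolding topn_def[of m "mv n A y"] by (intro sum_mono) auto
  then show ?thesis by (simp add: sum_distrib_right)
qed

lemma botn_mv:
  assumes H2: "\<forall>p l. p \<le> n \<longrightarrow> l \<le> n \<longrightarrow> Suc l < p \<longrightarrow> A p l = 0"
    and mn: "m \<le> n" and ym: "y m = 0"
  shows "botn n m (mv n A y) \<le> (\<Sum>k\<in>{m<..n}. \<Sum>l\<in>{m<..n}. cmod (A k l)) * botn n m y"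
proof -
  have "cmod (mv n A y k) \<le> (\<Sum>l\<in>{m<..n}. cmod (A k l)) * botn n m y" if km: "k \<in> {m<..n}" for k
  proof -
    have "cmod (mv n A y k) \<le> (\<Sum>l\<in>{m<..n}. cmod (A k l * y l))"
      using botA[of n A m y k, OF H2 mn ym km] by (simp add: norm_sum)
    also have "\<dots> \<le> (\<Sum>l\<in>{m<..n}. cmod (A k l) * botn n m y)"
      by (rule sum_mono) (simp add: norm_mult le_botn mult_left_mono)
    finally show ?thesis by (simp add: sum_distrib_right)
  qed
  then have "botn n m (mv n A y) \<le> (\<Sum>k\<in>{m<..n}. (\<Sum>l\<in>{m<..n}. cmod (A k l)) * botn n m y)"
    unfolding botn_def[of n m "mv n A y"] by (intro sum_mono) auto
  then show ?thesis by (simp add: sum_distrib_right)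
qed


lemma BB:
  assumes H1: "\<forall>p l. p \<le> n \<longrightarrow> l \<le> n \<longrightarrow> Suc p < l \<longrightarrow> A p l = 0"
    and H3: "\<forall>p<n. A p (Suc p) \<noteq> 0" and mn: "m \<le> n"
  shows "\<exists>K\<ge>0. \<forall>y. WW n A m y \<longrightarrow> (\<forall>i\<le>j. m + i \<le> n \<longrightarrow> cmod (y (m + i)) \<le> K * topn m y)"
proof (induction j)
  case 0
  show ?case by (rule exI[of _ 0]) (auto dest: WW_zero)
next
  case (Suc j)
  then obtain K where K0: "K \<ge> 0" and KH: "\<And>y i. WW n A m y \<Longrightarrow> i \<le> j \<Longrightarrow> m + i \<le> n \<Longrightarrow> cmod (y (m + i)) \<le> K * topn m y"
    by blast
  define p where "p = m + j"
  define Rt where "Rt = (\<Sum>k<m. \<Sum>l<m. cmod (A k l))"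
  define S where "S = (\<Sum>l\<le>n. cmod (A p l))"
  define a where "a = cmod (A p (Suc p))"
  define K' where "K' = max K ((K * Rt + S * (K + 1)) / a)"
  have Rt0: "Rt \<ge> 0" unfolding Rt_def by (simp add: sum_nonneg)
  have S0: "S \<ge> 0" unfolding S_def by (simp add: sum_nonneg)
  show ?case
  proof (intro exI[of _ K'] conjI allI impI)
    show "0 \<le> K'" unfolding K'_def using K0 by simp
    fix y i assume W: "WW n A m y" and ij: "i \<le> Suc j" and imn: "m + i \<le> n"
    have ym: "y m = 0" using W by (rule WW_zero)
    have tn0: "topn m y \<ge> 0" by (rule topn_nonneg)
    show "cmod (y (m + i)) \<le> K' * topn m y"
    proof (cases "i \<le> j")
      case True
      then have "cmod (y (m + i)) \<le> K * topn m y" using KH W imn by blast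
      also have "\<dots> \<le> K' * topn m y" unfolding K'_def by (intro mult_right_mono tn0) simp
      finally show ?thesis .
    next
      case False
      then have i: "i = Suc j" using ij by simp
      have pn: "p < n" using imn i p_def by simp
      have a0: "a > 0" unfolding a_def using H3 pn by simp
      have row: "mv n A y p = A p (Suc p) * y (Suc p) + (\<Sum>l\<in>{..n} - {Suc p}. A p l * y l)"
        unfolding mv_def using pn by (subst sum.remove[of _ "Suc p"]) auto
      have rest: "cmod (\<Sum>l\<in>{..n} - {Suc p}. A p l * y l) \<le> S * ((K + 1) * topn m y)"
      proof -
        have "cmod (\<Sum>l\<in>{..n} - {Suc p}. A p l * y l) \<le> (\<Sum>l\<in>{..n} - {Suc p}. cmod (A p l * y l))"
          by (rule norm_sum)
        also have "\<dots> \<le> (\<Sum>l\<in>{..n} - {Suc p}. cmod (A p l) * ((K + 1) * topn m y))"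
        proof (rule sum_mono)
          fix l assume l: "l \<in> {..n} - {Suc p}"
          show "cmod (A p l * y l) \<le> cmod (A p l) * ((K + 1) * topn m y)"
          proof (cases "Suc p < l")
            case True
            then have "A p l = 0" using H1 l pn by auto
            then show ?thesis using K0 tn0 by simp
          next
            case False
            then have lp: "l \<le> p" using l by auto
            have "cmod (y l) \<le> (K + 1) * topn m y"
            proof (cases "l < m")
              case True
              then have "cmod (y l) \<le> topn m y" by (rule le_topn)
              also have "\<dots> \<le> (K + 1) * topn m y" using K0 tn0 by (simp add: mult_le_cancel_right1)
              finally show ?thesis .
            next
              case False
              then have "l = m + (l - m)" "l - m \<le> j" using lp p_def by auto
              then have "cmod (y l) \<le> K * topn m y" using KH[OF W, of "l - m"] l by auto
              also have "\<dots> \<le> (K + 1) * topn m y" using tn0 by (simp add: mult_right_mono)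
              finally show ?thesis .
            qed
            then show ?thesis by (simp add: norm_mult mult_left_mono)
          qed
        qed
        also have "\<dots> \<le> (\<Sum>l\<le>n. cmod (A p l) * ((K + 1) * topn m y))"
          by (rule sum_mono2) (use K0 tn0 in auto)
        finally show ?thesis unfolding S_def by (simp add: sum_distrib_right)
      qed
      have Ay: "cmod (mv n A y p) \<le> K * Rt * topn m y"
      proof -
        have "cmod (mv n A y p) \<le> K * topn m (mv n A y)"
          using KH[OF WW_mv[OF W], of j] pn p_def by simp
        also have "\<dots> \<le> K * (Rt * topn m y)"
          unfolding Rt_def by (intro mult_left_mono topn_mv[of n A m y, OF H1 mn ym] K0)
        finally show ?thesis by simp
      qed
      have "A p (Suc p) * y (Suc p) = mv n A y p - (\<Sum>l\<in>{..n} - {Suc p}. A p l * y l)"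
        using row by simp
      then have "a * cmod (y (Suc p)) \<le> cmod (mv n A y p) + cmod (\<Sum>l\<in>{..n} - {Suc p}. A p l * y l)"
        unfolding a_def by (metis norm_mult norm_triangle_ineq4)
      also have "\<dots> \<le> (K * Rt + S * (K + 1)) * topn m y"
        using Ay rest by (simp add: algebra_simps)
      finally have "cmod (y (Suc p)) \<le> ((K * Rt + S * (K + 1)) / a) * topn m y"
        using a0 by (simp add: field_simps)
      also have "\<dots> \<le> K' * topn m y" unfolding K'_def by (intro mult_right_mono tn0) simp
      finally show ?thesis using i p_def by simp
    qed
  qed
qed


lemma TB:
  assumes H2: "\<forall>p l. p \<le> n \<longrightarrow> l \<le> n \<longrightarrow> Suc l < p \<longrightarrow> A p l = 0"
    and H4: "\<forall>p<n. A (Suc p) p \<noteq> 0" and mn: "m \<le> n"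
  shows "\<exists>K\<ge>0. \<forall>y. WW n A m y \<longrightarrow> (\<forall>i\<le>j. i \<le> m \<longrightarrow> cmod (y (m - i)) \<le> K * botn n m y)"
proof (induction j)
  case 0
  show ?case by (rule exI[of _ 0]) (auto dest: WW_zero)
next
  case (Suc j)
  then obtain K where K0: "K \<ge> 0" and KH: "\<And>y i. WW n A m y \<Longrightarrow> i \<le> j \<Longrightarrow> i \<le> m \<Longrightarrow> cmod (y (m - i)) \<le> K * botn n m y"
    by blast
  define p where "p = m - j"
  define q where "q = m - Suc j"
  define Rb where "Rb = (\<Sum>k\<in>{m<..n}. \<Sum>l\<in>{m<..n}. cmod (A k l))"
  define S where "S = (\<Sum>l\<le>n. cmod (A p l))"
  define a where "a = cmod (A p q)"
  define K' where "K' = max K ((K * Rb + S * (K + 1)) / a)"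
  have Rb0: "Rb \<ge> 0" unfolding Rb_def by (simp add: sum_nonneg)
  have S0: "S \<ge> 0" unfolding S_def by (simp add: sum_nonneg)
  show ?case
  proof (intro exI[of _ K'] conjI allI impI)
    show "0 \<le> K'" unfolding K'_def using K0 by simp
    fix y i assume W: "WW n A m y" and ij: "i \<le> Suc j" and imn: "i \<le> m"
    have ym: "y m = 0" using W by (rule WW_zero)
    have tn0: "botn n m y \<ge> 0" by (rule botn_nonneg)
    show "cmod (y (m - i)) \<le> K' * botn n m y"
    proof (cases "i \<le> j")
      case True
      then have "cmod (y (m - i)) \<le> K * botn n m y" using KH W imn by blast
      also have "\<dots> \<le> K' * botn n m y" unfolding K'_def by (intro mult_right_mono tn0) simp
      finally show ?thesis .
    next
      case False
      then have i: "i = Suc j" using ij by simp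
      have pq: "p = Suc q" using imn i p_def q_def by simp
      have qn: "q < n" using imn i q_def mn by simp
      have pn: "p \<le> n" using pq qn by simp
      have a0: "a > 0" unfolding a_def using H4 qn pq by simp
      have row: "mv n A y p = A p q * y q + (\<Sum>l\<in>{..n} - {q}. A p l * y l)"
        unfolding mv_def using qn by (subst sum.remove[of _ q]) auto
      have rest: "cmod (\<Sum>l\<in>{..n} - {q}. A p l * y l) \<le> S * ((K + 1) * botn n m y)"
      proof -
        have "cmod (\<Sum>l\<in>{..n} - {q}. A p l * y l) \<le> (\<Sum>l\<in>{..n} - {q}. cmod (A p l * y l))"
          by (rule norm_sum)
        also have "\<dots> \<le> (\<Sum>l\<in>{..n} - {q}. cmod (A p l) * ((K + 1) * botn n m y))"
        proof (rule sum_mono)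
          fix l assume l: "l \<in> {..n} - {q}"
          show "cmod (A p l * y l) \<le> cmod (A p l) * ((K + 1) * botn n m y)"
          proof (cases "Suc l < p")
            case True
            then have "A p l = 0" using H2 l pn by auto
            then show ?thesis using K0 tn0 by simp
          next
            case False
            then have lp: "p \<le> l" using l pq by auto
            have "cmod (y l) \<le> (K + 1) * botn n m y"
            proof (cases "m < l")
              case True
              then have "cmod (y l) \<le> botn n m y" using l by (intro le_botn) auto
              also have "\<dots> \<le> (K + 1) * botn n m y" using K0 tn0 by (simp add: mult_le_cancel_right1)
              finally show ?thesis .
            next
              case False
              then have "l = m - (m - l)" "m - l \<le> j" using lp p_def by auto
              then have "cmod (y l) \<le> K * botn n m y" using KH[OF W, of "m - l"] l by auto
              also have "\<dots> \<le> (K + 1) * botn n m y" using tn0 by (simp add: mult_right_mono)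
              finally show ?thesis .
            qed
            then show ?thesis by (simp add: norm_mult mult_left_mono)
          qed
        qed
        also have "\<dots> \<le> (\<Sum>l\<le>n. cmod (A p l) * ((K + 1) * botn n m y))"
          by (rule sum_mono2) (use K0 tn0 in auto)
        finally show ?thesis unfolding S_def by (simp add: sum_distrib_right)
      qed
      have Ay: "cmod (mv n A y p) \<le> K * Rb * botn n m y"
      proof -
        have "cmod (mv n A y p) \<le> K * botn n m (mv n A y)"
          using KH[OF WW_mv[OF W], of j] p_def imn i by simp
        also have "\<dots> \<le> K * (Rb * botn n m y)"
          unfolding Rb_def by (intro mult_left_mono botn_mv[of n A m y, OF H2 mn ym] K0)
        finally show ?thesis by simp
      qed
      have "A p q * y q = mv n A y p - (\<Sum>l\<in>{..n} - {q}. A p l * y l)"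
        using row by simp
      then have "a * cmod (y q) \<le> cmod (mv n A y p) + cmod (\<Sum>l\<in>{..n} - {q}. A p l * y l)"
        unfolding a_def by (metis norm_mult norm_triangle_ineq4)
      also have "\<dots> \<le> (K * Rb + S * (K + 1)) * botn n m y"
        using Ay rest by (simp add: algebra_simps)
      finally have "cmod (y q) \<le> ((K * Rb + S * (K + 1)) / a) * botn n m y"
        using a0 by (simp add: field_simps)
      also have "\<dots> \<le> K' * botn n m y" unfolding K'_def by (intro mult_right_mono tn0) simp
      finally show ?thesis using i q_def by simp
    qed
  qed
qed


definition Mf :: "nat \<Rightarrow> (nat \<Rightarrow> nat \<Rightarrow> complex) \<Rightarrow> real \<Rightarrow> (nat \<Rightarrow> complex) \<Rightarrow> nat \<Rightarrow> complex" where
  "Mf n A s y = (\<lambda>j. complex_of_real s * y j - mv n A y j)"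

lemma WW_Mf: "WW n A m y \<Longrightarrow> WW n A m (Mf n A s y)"
proof -
  assume W: "WW n A m y"
  have "Mf n A s y = (\<lambda>j. complex_of_real s * y j + (-1) * mv n A y j)"
    by (simp add: Mf_def fun_eq_iff)
  then show ?thesis using WW_lin[OF W WW_mv[OF W], of "complex_of_real s" "-1"] by simp
qed

lemma growth_top:
  assumes H1: "\<forall>p l. p \<le> n \<longrightarrow> l \<le> n \<longrightarrow> Suc p < l \<longrightarrow> A p l = 0"
    and mn: "m \<le> n" and ym: "y m = 0"
    and diag: "\<forall>k\<le>n. A k k = complex_of_real (dd k)"
    and off: "\<forall>k\<le>n. \<forall>l\<le>n. k \<noteq> l \<longrightarrow> cmod (A k l) \<le> e"
    and e0: "e \<ge> 0" and a0: "a \<ge> 0"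
    and top: "\<forall>k<m. a + real (Suc n) * e \<le> s - dd k"
  shows "a * topn m y \<le> topn m (Mf n A s y)"
proof -
  have tn0: "topn m y \<ge> 0" by (rule topn_nonneg)
  have pt: "(a + real (Suc n) * e) * cmod (y k) - e * topn m y \<le> cmod (Mf n A s y k)" if km: "k < m" for k
  proof -
    have kn: "k \<le> n" using km mn by simp
    have eq: "Mf n A s y k = complex_of_real (s - dd k) * y k - (\<Sum>l\<in>{..<m} - {k}. A k l * y l)"
      using km diag kn unfolding Mf_def topA[of n A m y k, OF H1 mn ym km]
      by (subst sum.remove[of _ k]) (auto simp: algebra_simps)
    have r: "cmod (\<Sum>l\<in>{..<m} - {k}. A k l * y l) \<le> e * topn m y"
    proof -
      have "cmod (\<Sum>l\<in>{..<m} - {k}. A k l * y l) \<le> (\<Sum>l\<in>{..<m} - {k}. cmod (A k l * y l))"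
        by (rule norm_sum)
      also have "\<dots> \<le> (\<Sum>l\<in>{..<m} - {k}. e * cmod (y l))"
        using off kn mn by (intro sum_mono) (auto simp: norm_mult intro!: mult_right_mono)
      also have "\<dots> \<le> (\<Sum>l\<in>{..<m}. e * cmod (y l))"
        by (rule sum_mono2) (use e0 in auto)
      finally show ?thesis by (simp add: topn_def sum_distrib_left)
    qed
    have "s - dd k \<ge> a + real (Suc n) * e" using top km by simp
    moreover have "a + real (Suc n) * e \<ge> 0" using a0 e0 by simp
    ultimately have "(a + real (Suc n) * e) * cmod (y k) \<le> cmod (complex_of_real (s - dd k) * y k)"
      by (simp add: norm_mult mult_right_mono abs_of_nonneg del: of_real_diff)
    then show ?thesis unfolding eq using r norm_triangle_ineq2[of "complex_of_real (s - dd k) * y k" "(\<Sum>l\<in>{..<m} - {k}. A k l * y l)"]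
      by linarith
  qed
  have "(\<Sum>k<m. (a + real (Suc n) * e) * cmod (y k) - e * topn m y) \<le> topn m (Mf n A s y)"
    unfolding topn_def[of m "Mf n A s y"] using pt by (intro sum_mono) auto
  moreover have "(\<Sum>k<m. (a + real (Suc n) * e) * cmod (y k) - e * topn m y)
      = (a + real (Suc n) * e) * topn m y - real m * e * topn m y"
    by (simp add: sum_subtractf topn_def sum_distrib_left mult.assoc)
  moreover have "real m * e * topn m y \<le> real (Suc n) * e * topn m y"
    using mn e0 tn0 by (intro mult_right_mono) auto
  ultimately show ?thesis by (simp add: algebra_simps)
qed

lemma growth_bot:
  assumes H2: "\<forall>p l. p \<le> n \<longrightarrow> l \<le> n \<longrightarrow> Suc l < p \<longrightarrow> A p l = 0"
    and mn: "m \<le> n" and ym: "y m = 0"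
    and diag: "\<forall>k\<le>n. A k k = complex_of_real (dd k)"
    and off: "\<forall>k\<le>n. \<forall>l\<le>n. k \<noteq> l \<longrightarrow> cmod (A k l) \<le> e"
    and e0: "e \<ge> 0"
    and bot: "\<forall>k\<in>{m<..n}. 0 \<le> s - dd k \<and> s - dd k \<le> b - real (Suc n) * e"
  shows "botn n m (Mf n A s y) \<le> b * botn n m y"
proof -
  have tn0: "botn n m y \<ge> 0" by (rule botn_nonneg)
  have pt: "cmod (Mf n A s y k) \<le> (b - real (Suc n) * e) * cmod (y k) + e * botn n m y" if km: "k \<in> {m<..n}" for k
  proof -
    have kn: "k \<le> n" using km by simp
    have eq: "Mf n A s y k = complex_of_real (s - dd k) * y k - (\<Sum>l\<in>{m<..n} - {k}. A k l * y l)"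
      using km diag kn unfolding Mf_def botA[of n A m y k, OF H2 mn ym km]
      by (subst sum.remove[of _ k]) (auto simp: algebra_simps)
    have r: "cmod (\<Sum>l\<in>{m<..n} - {k}. A k l * y l) \<le> e * botn n m y"
    proof -
      have "cmod (\<Sum>l\<in>{m<..n} - {k}. A k l * y l) \<le> (\<Sum>l\<in>{m<..n} - {k}. cmod (A k l * y l))"
        by (rule norm_sum)
      also have "\<dots> \<le> (\<Sum>l\<in>{m<..n} - {k}. e * cmod (y l))"
        using off kn mn by (intro sum_mono) (auto simp: norm_mult intro!: mult_right_mono)
      also have "\<dots> \<le> (\<Sum>l\<in>{m<..n}. e * cmod (y l))"
        by (rule sum_mono2) (use e0 in auto)
      finally show ?thesis by (simp add: botn_def sum_distrib_left)
    qed
    have "0 \<le> s - dd k" "s - dd k \<le> b - real (Suc n) * e" using bot km by auto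
    then have "cmod (complex_of_real (s - dd k) * y k) \<le> (b - real (Suc n) * e) * cmod (y k)"
      by (simp add: norm_mult mult_right_mono abs_of_nonneg del: of_real_diff)
    then show ?thesis unfolding eq using r norm_triangle_ineq4[of "complex_of_real (s - dd k) * y k" "(\<Sum>l\<in>{m<..n} - {k}. A k l * y l)"]
      by linarith
  qed
  have "botn n m (Mf n A s y) \<le> (\<Sum>k\<in>{m<..n}. (b - real (Suc n) * e) * cmod (y k) + e * botn n m y)"
    unfolding botn_def[of n m "Mf n A s y"] using pt by (intro sum_mono) auto
  moreover have "(\<Sum>k\<in>{m<..n}. (b - real (Suc n) * e) * cmod (y k) + e * botn n m y)
      = (b - real (Suc n) * e) * botn n m y + real (n - m) * e * botn n m y"
    by (simp add: sum.distrib botn_def sum_distrib_left mult.assoc)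
  moreover have "real (n - m) * e * botn n m y \<le> real (Suc n) * e * botn n m y"
    using mn e0 tn0 by (intro mult_right_mono) auto
  ultimately show ?thesis by (simp add: algebra_simps)
qed


lemma core:
  assumes H1: "\<forall>p l. p \<le> n \<longrightarrow> l \<le> n \<longrightarrow> Suc p < l \<longrightarrow> A p l = 0"
    and H2: "\<forall>p l. p \<le> n \<longrightarrow> l \<le> n \<longrightarrow> Suc l < p \<longrightarrow> A p l = 0"
    and H3: "\<forall>p<n. A p (Suc p) \<noteq> 0"
    and H4: "\<forall>p<n. A (Suc p) p \<noteq> 0"
    and mn: "m \<le> n"
    and diag: "\<forall>k\<le>n. A k k = complex_of_real (dd k)"
    and off: "\<forall>k\<le>n. \<forall>l\<le>n. k \<noteq> l \<longrightarrow> cmod (A k l) \<le> e"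
    and e0: "e \<ge> 0" and b0: "0 \<le> b" and ab: "b < a"
    and top: "\<forall>k<m. a + real (Suc n) * e \<le> s - dd k"
    and bot: "\<forall>k\<in>{m<..n}. 0 \<le> s - dd k \<and> s - dd k \<le> b - real (Suc n) * e"
    and W: "WW n A m x"
  shows "\<forall>j\<le>n. x j = 0"
proof -
  have a0: "a > 0" using b0 ab by simp
  define X where "X k = (Mf n A s ^^ k) x" for k
  have WX: "WW n A m (X k)" for k
    by (induction k) (simp_all add: X_def W WW_Mf)
  have gt: "a ^ k * topn m x \<le> topn m (X k)" for k
  proof (induction k)
    case 0 then show ?case by (simp add: X_def)
  next
    case (Suc k)
    have "a ^ Suc k * topn m x = a * (a ^ k * topn m x)" by simp
    also have "\<dots> \<le> a * topn m (X k)" using Suc a0 by (simp add: mult_left_mono)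
    also have "\<dots> \<le> topn m (Mf n A s (X k))"
      by (rule growth_top[of n A m "X k", OF H1 mn WW_zero[OF WX[of k]] diag off e0 less_imp_le[OF a0] top])
    finally show ?case by (simp add: X_def)
  qed
  have gb: "botn n m (X k) \<le> b ^ k * botn n m x" for k
  proof (induction k)
    case 0 then show ?case by (simp add: X_def)
  next
    case (Suc k)
    have "botn n m (X (Suc k)) = botn n m (Mf n A s (X k))" by (simp add: X_def)
    also have "\<dots> \<le> b * botn n m (X k)"
      by (rule growth_bot[of n A m "X k", OF H2 mn WW_zero[OF WX[of k]] diag off e0 bot])
    also have "\<dots> \<le> b * (b ^ k * botn n m x)" using Suc b0 by (simp add: mult_left_mono)
    finally show ?case by simp
  qed
  obtain K where K0: "K \<ge> 0" and KH: "\<And>y i. WW n A m y \<Longrightarrow> i \<le> m \<Longrightarrow> cmod (y (m - i)) \<le> K * botn n m y"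
    using TB[OF H2 H4 mn, of m] by blast
  have tb: "topn m y \<le> real m * K * botn n m y" if Wy: "WW n A m y" for y
  proof -
    have "topn m y \<le> (\<Sum>k<m. K * botn n m y)"
      unfolding topn_def
    proof (rule sum_mono)
      fix k assume "k \<in> {..<m}"
      then have "k = m - (m - k)" "m - k \<le> m" by auto
      then show "cmod (y k) \<le> K * botn n m y" using KH[OF Wy, of "m - k"] by metis
    qed
    then show ?thesis by simp
  qed
  define K2 where "K2 = real m * K"
  have K20: "K2 \<ge> 0" using K0 by (simp add: K2_def)
  have key: "topn m x \<le> K2 * (b / a) ^ k * botn n m x" for k
  proof -
    have "a ^ k * topn m x \<le> K2 * (b ^ k * botn n m x)"
      using gt[of k] tb[OF WX[of k]] gb[of k] K20 unfolding K2_def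
      by (meson mult_left_mono order_trans)
    then have "topn m x \<le> K2 * (b ^ k * botn n m x) / a ^ k"
      using a0 by (simp add: field_simps)
    then show ?thesis by (simp add: power_divide)
  qed
  have t0: "topn m x = 0"
  proof (rule ccontr)
    assume "topn m x \<noteq> 0"
    then have tp: "topn m x > 0" using topn_nonneg[of m x] by simp
    define B where "B = K2 * botn n m x + 1"
    have B1: "B \<ge> 1" unfolding B_def using K20 botn_nonneg[of n m x] by simp
    obtain k where k: "(b / a) ^ k < topn m x / B"
      using real_arch_pow_inv[of "topn m x / B" "b / a"] tp B1 ab b0 a0 by auto
    have q0: "(b / a) ^ k \<ge> 0" using b0 a0 by simp
    have "topn m x \<le> K2 * (b / a) ^ k * botn n m x" by (rule key)
    also have "\<dots> \<le> B * (b / a) ^ k" unfolding B_def using q0 by (simp add: algebra_simps)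
    also have "\<dots> < topn m x" using k B1 by (simp add: field_simps)
    finally show False by simp
  qed
  have xt: "x k = 0" if "k < m" for k
    using le_topn[OF that, of x] t0 by simp
  obtain K3 where K3: "\<And>y i. WW n A m y \<Longrightarrow> i \<le> n \<Longrightarrow> m + i \<le> n \<Longrightarrow> cmod (y (m + i)) \<le> K3 * topn m y"
    using BB[OF H1 H3 mn, of n] by blast
  show ?thesis
  proof (intro allI impI)
    fix j assume jn: "j \<le> n"
    show "x j = 0"
    proof (cases "j < m")
      case True then show ?thesis by (rule xt)
    next
      case False
      then have "j = m + (j - m)" by simp
      then have "cmod (x j) \<le> K3 * topn m x" using K3[OF W, of "j - m"] jn by simp
      then show ?thesis using t0 by simp
    qed
  qed
qed


lemma ode_chain:
  assumes sol: "solves_ode n A T v" and T0: "T > 0" and mn: "m \<le> n"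
    and z: "\<forall>t\<in>{0..T}. v t m = 0"
  shows "WW n A m (v 0)"
proof -
  have D: "\<forall>t\<in>{0..T}. \<forall>j\<le>n. ((\<lambda>s. (mv n A ^^ k) (v s) j) has_vector_derivative (mv n A ^^ Suc k) (v t) j) (at t within {0..T})" for k
  proof (induction k)
    case 0
    then show ?case using sol by (simp add: solves_ode_def mv_def)
  next
    case (Suc k)
    show ?case
    proof (intro ballI allI impI)
      fix t j assume t: "t \<in> {0..T}" and j: "j \<le> n"
      have "((\<lambda>s. \<Sum>l\<le>n. A j l * (mv n A ^^ k) (v s) l) has_vector_derivative
              (\<Sum>l\<le>n. A j l * (mv n A ^^ Suc k) (v t) l)) (at t within {0..T})"
        by (intro has_vector_derivative_sum has_vector_derivative_mult_right) (use Suc t in auto)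
      then show "((\<lambda>s. (mv n A ^^ Suc k) (v s) j) has_vector_derivative (mv n A ^^ Suc (Suc k)) (v t) j) (at t within {0..T})"
        by (simp add: mv_def)
    qed
  qed
  have Z: "\<forall>t\<in>{0..T}. (mv n A ^^ k) (v t) m = 0" for k
  proof (induction k)
    case 0 then show ?case using z by simp
  next
    case (Suc k)
    show ?case
    proof
      fix t assume t: "t \<in> {0..T}"
      have d1: "((\<lambda>s. (mv n A ^^ k) (v s) m) has_vector_derivative (mv n A ^^ Suc k) (v t) m) (at t within {0..T})"
        using D[of k] t mn by blast
      have d2: "((\<lambda>s. (mv n A ^^ k) (v s) m) has_vector_derivative 0) (at t within {0..T})"
        by (rule has_vector_derivative_transform[OF t _ has_vector_derivative_const]) (use Suc in auto)
      show "(mv n A ^^ Suc k) (v t) m = 0"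
        using vector_derivative_unique_within_closed_interval[of 0 T t] d1 d2 T0 t by auto
    qed
  qed
  show ?thesis unfolding WW_def using Z T0 by auto
qed

lemma vdot_psi: "m \<le> n \<Longrightarrow> vdot n w (psi m) = cnj (w m)"
  by (simp add: vdot_def psi_def if_distrib cong: if_cong)


lemma Fz_sq: "j \<le> n \<Longrightarrow> mmul n (Fz n) (Fz n) j l = (if j = l then complex_of_real ((real j - spinJ n)^2) else 0)"
proof -
  assume j: "j \<le> n"
  have "(\<Sum>p\<le>n. Fz n j p * Fz n p l) = (\<Sum>p\<le>n. if p = j then Fz n j j * Fz n j l else 0)"
    by (rule sum.cong) (auto simp: Fz_def)
  also have "\<dots> = Fz n j j * Fz n j l" using j by simp
  finally show ?thesis by (simp add: mmul_def Fz_def power2_eq_square)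
qed

lemma Gen_off: "j \<le> n \<Longrightarrow> j \<noteq> l \<Longrightarrow> Gen n C j l = - \<i> * Fy n j l"
  by (simp add: Gen_def Fz_sq Fz_def)

lemma Gen_diag: "j \<le> n \<Longrightarrow> Gen n C j j = complex_of_real (C * (real j - spinJ n) - (real j - spinJ n)^2)"
  by (simp add: Gen_def Fz_sq Fz_def Fy_def)

lemma Gen_H1: "\<forall>p l. p \<le> n \<longrightarrow> l \<le> n \<longrightarrow> Suc p < l \<longrightarrow> Gen n C p l = 0"
  by (auto simp: Gen_off Fy_def)

lemma Gen_H2: "\<forall>p l. p \<le> n \<longrightarrow> l \<le> n \<longrightarrow> Suc l < p \<longrightarrow> Gen n C p l = 0"
  by (auto simp: Gen_off Fy_def)

lemma Gen_H3: "\<forall>p<n. Gen n C p (Suc p) \<noteq> 0"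
proof (intro allI impI)
  fix p assume p: "p < n"
  have "(spinJ n - (spinJ n - real (Suc p))) * (spinJ n + (spinJ n - real (Suc p)) + 1) = real (Suc p) * (real n - real p)"
    by (simp add: spinJ_def algebra_simps)
  moreover have "real (Suc p) * (real n - real p) > 0" using p by simp
  ultimately have "cc n (spinJ n - real (Suc p)) > 0" unfolding cc_def by simp
  then show "Gen n C p (Suc p) \<noteq> 0" using p by (simp add: Gen_off Fy_def)
qed

lemma Gen_H4: "\<forall>p<n. Gen n C (Suc p) p \<noteq> 0"
proof (intro allI impI)
  fix p assume p: "p < n"
  have "(spinJ n - (real p - spinJ n)) * (spinJ n + (real p - spinJ n) + 1) = (real n - real p) * real (Suc p)"
    by (simp add: spinJ_def algebra_simps)
  moreover have "(real n - real p) * real (Suc p) > 0" using p by simp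
  ultimately have "cc n (real p - spinJ n) > 0" unfolding cc_def by simp
  then show "Gen n C (Suc p) p \<noteq> 0" using p by (simp add: Gen_off Fy_def)
qed

definition ee :: "nat \<Rightarrow> real" where
  "ee n = (\<Sum>j\<le>n. \<Sum>l\<le>n. cmod (Fy n j l))"

lemma Gen_offb: "\<forall>k\<le>n. \<forall>l\<le>n. k \<noteq> l \<longrightarrow> cmod (Gen n C k l) \<le> ee n"
proof (intro allI impI)
  fix k l assume k: "k \<le> n" and l: "l \<le> n" and kl: "k \<noteq> l"
  have "cmod (Fy n k l) \<le> (\<Sum>l\<le>n. cmod (Fy n k l))" by (rule member_le_sum) (use l in auto)
  also have "\<dots> \<le> ee n" unfolding ee_def
    by (rule member_le_sum[where f = "\<lambda>j. \<Sum>l\<le>n. cmod (Fy n j l)"]) (use k in \<open>auto intro: sum_nonneg\<close>)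
  finally show "cmod (Gen n C k l) \<le> ee n" using k kl by (simp add: Gen_off norm_mult)
qed

lemma ee_nonneg: "ee n \<ge> 0" unfolding ee_def by (simp add: sum_nonneg)


theorem lemma4p3:
  fixes n :: nat and T :: real and m :: nat
  assumes "n > 0" and "T > 0" and "m \<le> n"
  shows "\<exists>C0::real. \<forall>C\<ge>C0. \<forall>v :: real \<Rightarrow> nat \<Rightarrow> complex.
           solves_ode n (Gen n C) T v \<and> (\<exists>k\<le>n. v 0 k \<noteq> 0)
           \<longrightarrow> (\<exists>t\<in>{0..T}. vdot n (v t) (psi m) \<noteq> 0)"
proof -
  define J where "J = spinJ n"
  define R where "R = real (Suc n) * ee n"
  have R0: "R \<ge> 0" unfolding R_def using ee_nonneg[of n] by simp
  have nJ: "real n = 2 * J" unfolding J_def spinJ_def by simp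
  show ?thesis
  proof (intro exI[of _ "J^2 + 2 * R + 1"] allI impI)
    fix C :: real and v assume C: "J^2 + 2 * R + 1 \<le> C"
      and hv: "solves_ode n (Gen n C) T v \<and> (\<exists>k\<le>n. v 0 k \<noteq> 0)"
    have C0: "C \<ge> 0" using C R0 by (smt (verit) zero_le_power2)
    define dd where "dd k = C * (real k - J) - (real k - J)^2" for k
    define s where "s = C * J"
    define a where "a = C * (real n - real m + 1) - R"
    define b where "b = C * real (n - m) + J^2 + R"
    have sd: "s - dd k = C * (real n - real k) + (real k - J)^2" for k
      unfolding s_def dd_def using nJ by (simp add: algebra_simps)
    have top: "\<forall>k<m. a + real (Suc n) * ee n \<le> s - dd k"
    proof (intro allI impI)
      fix k assume k: "k < m"
      have "C * (real n - real m + 1) \<le> C * (real n - real k)"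
        using k C0 by (intro mult_left_mono) auto
      then show "a + real (Suc n) * ee n \<le> s - dd k"
        unfolding sd a_def R_def by (smt (verit) zero_le_power2)
    qed
    have bot: "\<forall>k\<in>{m<..n}. 0 \<le> s - dd k \<and> s - dd k \<le> b - real (Suc n) * ee n"
    proof
      fix k assume k: "k \<in> {m<..n}"
      have "C * (real n - real k) \<le> C * real (n - m)"
        using k C0 \<open>m \<le> n\<close> by (intro mult_left_mono) auto
      moreover have "0 \<le> C * (real n - real k)" using k C0 by simp
      moreover have "(real k - J)^2 \<le> J^2"
      proof -
        have "(real k - J)^2 - J^2 = real k * (real k - real n)" using nJ by (simp add: power2_eq_square algebra_simps)
        moreover have "real k * (real k - real n) \<le> 0" using k by (simp add: mult_nonneg_nonpos)
        ultimately show ?thesis by simp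
      qed
      ultimately show "0 \<le> s - dd k \<and> s - dd k \<le> b - real (Suc n) * ee n"
        unfolding sd b_def R_def by (smt (verit) zero_le_power2)
    qed
    have b0: "0 \<le> b" unfolding b_def using C0 R0 by simp
    have ab: "b < a" unfolding a_def b_def using C \<open>m \<le> n\<close> by (simp add: algebra_simps of_nat_diff)
    have diag: "\<forall>k\<le>n. Gen n C k k = complex_of_real (dd k)"
      by (simp add: Gen_diag dd_def J_def)
    show "\<exists>t\<in>{0..T}. vdot n (v t) (psi m) \<noteq> 0"
    proof (rule ccontr)
      assume "\<not> ?thesis"
      then have z: "\<forall>t\<in>{0..T}. v t m = 0" using vdot_psi[OF \<open>m \<le> n\<close>] by auto
      have W: "WW n (Gen n C) m (v 0)"
        using ode_chain[of n "Gen n C" T v m, OF _ \<open>T > 0\<close> \<open>m \<le> n\<close> z] hv by blast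
      have "\<forall>j\<le>n. v 0 j = 0"
        by (rule core[OF Gen_H1 Gen_H2 Gen_H3 Gen_H4 \<open>m \<le> n\<close> diag Gen_offb ee_nonneg b0 ab top bot W])
      then show False using hv by blast
    qed
  qed
qed

end
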